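(* Let $\Sigma$ be a finite alphabet and let $\mathbf w$ be a right-infinite word over $\Sigma$. Suppose there is a positive number $\kappa$ such that for each integer $b\ge1$ there is an integer $n=n(b)\ge 1$ with $L_{\mathbf w}(bn)\le\kappa$. Then $\#\mathrm{Per}(\mathbf w)\le\kappa$. In particular, if $L_{\mathbf w}$ is uniformly bounded, then $\mathrm{Per}(\mathbf w)$ is finite.
   Context: $\mathrm{Fac}(\mathbf u)$ denotes the set of finite factors (contiguous blocks) of a right-infinite word $\mathbf u$. Two words are cyclically equivalent if each is a cyclic shift of the other; $[v]_C$ is the class of $v$. $L_{\mathbf w}(n)=\#\{[v]_C : |v|=n,\ [v]_C\subseteq \mathrm{Fac}(\mathbf w)\}$. Call two right-infinite words equivalent ($\sim$) if they have the same set of finite factors. $\mathrm{Per}(\mathbf w)$ is the set of $\sim$-equivalence classes of right-infinite periodic words $v^\omega=vvv\cdots$ ($v$ nonempty) with $\mathrm{Fac}(v^\omega)\subseteq\mathrm{Fac}(\mathbf w)$. *)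

theory Defs
  imports Complex_Main
begin

definition Fac :: "(nat \<Rightarrow> 'a) \<Rightarrow> 'a list set" where
  "Fac u = {v. \<exists>i. v = map u [i..<i + length v]}"

definition cyc_class :: "'a list \<Rightarrow> 'a list set" where
  "cyc_class v = {rotate k v | k. True}"

definition L :: "(nat \<Rightarrow> 'a) \<Rightarrow> nat \<Rightarrow> nat" where
  "L w n = card {cyc_class v | v. length v = n \<and> cyc_class v \<subseteq> Fac w}"

definition omega :: "'a list \<Rightarrow> (nat \<Rightarrow> 'a)" where
  "omega v = (\<lambda>i. v ! (i mod length v))"

definition fac_equiv_class :: "(nat \<Rightarrow> 'a) \<Rightarrow> (nat \<Rightarrow> 'a) set" where
  "fac_equiv_class u = {u'. Fac u' = Fac u}"

definition Per :: "(nat \<Rightarrow> 'a) \<Rightarrow> (nat \<Rightarrow> 'a) set set" where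
  "Per w = {fac_equiv_class (omega v) | v. v \<noteq> [] \<and> Fac (omega v) \<subseteq> Fac w}"

end

theory Submission
  imports Defs
begin

lemma omega_mod:
  assumes "length v dvd N" "v \<noteq> []"
  shows "omega v (t mod N) = omega v t"
  using assms by (simp add: omega_def mod_mod_cancel)

lemma Fac_shift:
  assumes per: "\<And>t. u (t mod N) = u t" and N: "N > 0"
  shows "Fac (\<lambda>t. u (t + k)) = Fac u"
proof
  show "Fac (\<lambda>t. u (t + k)) \<subseteq> Fac u"
  proof
    fix x assume "x \<in> Fac (\<lambda>t. u (t + k))"
    then obtain i where x: "x = map (\<lambda>t. u (t + k)) [i..<i + length x]" by (auto simp: Fac_def)
    have "x = map u [i+k..<i+k + length x]"
      by (rule nth_equalityI) (subst x, simp add: algebra_simps)+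
    then show "x \<in> Fac u" unfolding Fac_def by blast
  qed
next
  show "Fac u \<subseteq> Fac (\<lambda>t. u (t + k))"
  proof
    fix x assume "x \<in> Fac u"
    then obtain i where x: "x = map u [i..<i + length x]" by (auto simp: Fac_def)
    have k: "k \<le> N * k" using N by simp
    have p: "u (m + N * k) = u m" for m
      by (metis per mod_mult_self1 mult.commute)
    have "x = map (\<lambda>t. u (t + k)) [i + N*k - k..<i + N*k - k + length x]"
    proof (rule nth_equalityI)
      show "length x = length (map (\<lambda>t. u (t + k)) [i + N*k - k..<i + N*k - k + length x])" by simp
      fix j assume j: "j < length x"
      have "x ! j = u (i + j)" using j by (subst x) simp
      also have "\<dots> = u (i + j + N * k)" by (rule p[symmetric])
      also have "i + j + N*k = i + N*k - k + j + k" using k by linarith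
      finally show "x ! j = map (\<lambda>t. u (t + k)) [i + N*k - k..<i + N*k - k + length x] ! j"
        using j by simp
    qed
    then show "x \<in> Fac (\<lambda>t. u (t + k))" unfolding Fac_def by blast
  qed
qed

lemma rot_map:
  assumes per: "\<And>t. u (t mod N) = u t"
  shows "rotate k (map u [0..<N]) = map u [k..<k+N]"
proof (rule nth_equalityI)
  fix i assume "i < length (rotate k (map u [0..<N]))"
  then have i: "i < N" by simp
  then have "rotate k (map u [0..<N]) ! i = u ((k + i) mod N)"
    by (simp add: nth_rotate)
  then show "rotate k (map u [0..<N]) ! i = map u [k..<k+N] ! i" using i per by simp
qed simp

lemma key:
  fixes w :: "nat \<Rightarrow> 'a::finite"
  assumes S: "finite S" "S \<subseteq> Per w"
  shows "\<exists>b\<ge>1. \<forall>n\<ge>1. card S \<le> L w (b * n)"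
proof -
  have "\<forall>P\<in>S. \<exists>v. P = fac_equiv_class (omega v) \<and> v \<noteq> [] \<and> Fac (omega v) \<subseteq> Fac w"
    using S by (auto simp: Per_def)
  then obtain f where f: "\<And>P. P \<in> S \<Longrightarrow> P = fac_equiv_class (omega (f P)) \<and> f P \<noteq> [] \<and> Fac (omega (f P)) \<subseteq> Fac w"
    by metis
  define b where "b = (\<Prod>P\<in>S. length (f P))"
  have "b > 0" unfolding b_def
    by (rule prod_pos) (use f in auto)
  then have b1: "b \<ge> 1" by simp
  have dv: "length (f P) dvd b" if "P \<in> S" for P
    unfolding b_def using S(1) that by (rule dvd_prod_eqI) simp
  show ?thesis
  proof (intro exI[of _ b] conjI allI impI b1)
    fix n :: nat assume n: "n \<ge> 1"
    define N where "N = b * n"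
    have N0: "N > 0" using n b1 unfolding N_def by simp
    have per: "\<And>t. omega (f P) (t mod N) = omega (f P) t" if "P \<in> S" for P
      using omega_mod[of "f P" N] dv[OF that] f[OF that] unfolding N_def by auto
    define g where "g P = cyc_class (map (omega (f P)) [0..<N])" for P
    define T where "T = {cyc_class v | v. length v = N \<and> cyc_class v \<subseteq> Fac w}"
    have sub: "g ` S \<subseteq> T"
    proof
      fix x assume "x \<in> g ` S"
      then obtain P where P: "P \<in> S" "x = g P" by blast
      have "cyc_class (map (omega (f P)) [0..<N]) \<subseteq> Fac (omega (f P))"
      proof
        fix y assume "y \<in> cyc_class (map (omega (f P)) [0..<N])"
        then obtain k where "y = rotate k (map (omega (f P)) [0..<N])" by (auto simp: cyc_class_def)
        then have "y = map (omega (f P)) [k..<k+length y]" using rot_map[of "omega (f P)" N, OF per[OF P(1)]] by simp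
        then show "y \<in> Fac (omega (f P))" unfolding Fac_def by blast
      qed
      then show "x \<in> T" unfolding T_def using P f[OF P(1)] g_def by fastforce
    qed
    have fin: "finite T"
    proof -
      have "T \<subseteq> cyc_class ` {v. set v \<subseteq> UNIV \<and> length v = N}" unfolding T_def by auto
      moreover have "finite {v::'a list. set v \<subseteq> UNIV \<and> length v = N}"
        by (rule finite_lists_length_eq) simp
      ultimately show ?thesis by (meson finite_surj)
    qed
    have inj: "inj_on g S"
    proof (rule inj_onI)
      fix P Q assume P: "P \<in> S" and Q: "Q \<in> S" and e: "g P = g Q"
      have "map (omega (f Q)) [0..<N] \<in> g Q" unfolding g_def cyc_class_def
        by (auto intro: exI[of _ 0])
      then have "map (omega (f Q)) [0..<N] \<in> g P" using e by simp
      then obtain k where k: "map (omega (f Q)) [0..<N] = map (omega (f P)) [k..<k+N]"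
        unfolding g_def cyc_class_def using rot_map[of "omega (f P)" N, OF per[OF P]] by auto
      have "omega (f Q) = (\<lambda>t. omega (f P) (t + k))"
      proof
        fix t
        have tN: "t mod N < N" using N0 by simp
        have "omega (f Q) t = omega (f Q) (t mod N)" using per[OF Q] by simp
        also have "\<dots> = map (omega (f Q)) [0..<N] ! (t mod N)" using tN by simp
        also have "\<dots> = omega (f P) (k + t mod N)" using tN by (subst k) simp
        also have "\<dots> = omega (f P) ((k + t mod N) mod N)" using per[OF P] by simp
        also have "\<dots> = omega (f P) (t + k)" using per[OF P]
          by (metis add.commute mod_add_right_eq)
        finally show "omega (f Q) t = omega (f P) (t + k)" .
      qed
      then have "Fac (omega (f Q)) = Fac (omega (f P))"
        using Fac_shift[of "omega (f P)" N k, OF per[OF P] N0] by simp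
      then show "P = Q" using f[OF P] f[OF Q] unfolding fac_equiv_class_def by simp
    qed
    have "card S = card (g ` S)" using inj by (simp add: card_image)
    also have "\<dots> \<le> card T" using sub fin by (rule card_mono[rotated])
    finally show "card S \<le> L w (b * n)" unfolding L_def T_def N_def .
  qed
qed

lemma bound:
  fixes w :: "nat \<Rightarrow> 'a::finite" and \<kappa> :: real
  assumes h: "\<forall>b::nat\<ge>1. \<exists>n::nat\<ge>1. real (L w (b * n)) \<le> \<kappa>"
    and S: "finite S" "S \<subseteq> Per w"
  shows "real (card S) \<le> \<kappa>"
proof -
  obtain b where b: "b \<ge> 1" "\<forall>n\<ge>1. card S \<le> L w (b * n)" using key[OF S] by blast
  obtain n where "n \<ge> 1" "real (L w (b * n)) \<le> \<kappa>" using h b(1) by blast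
  then show ?thesis using b(2) by (meson of_nat_le_iff order_trans)
qed

theorem mainTheorem6:
  fixes w :: "nat \<Rightarrow> 'a::finite"
  shows "(\<forall>\<kappa>::real. \<kappa> > 0 \<and> (\<forall>b::nat\<ge>1. \<exists>n::nat\<ge>1. real (L w (b * n)) \<le> \<kappa>)
            \<longrightarrow> finite (Per w) \<and> real (card (Per w)) \<le> \<kappa>)
       \<and> ((\<exists>C::nat. \<forall>n. L w n \<le> C) \<longrightarrow> finite (Per w))"
proof -
  have A: "finite (Per w) \<and> real (card (Per w)) \<le> \<kappa>"
    if h: "\<forall>b::nat\<ge>1. \<exists>n::nat\<ge>1. real (L w (b * n)) \<le> \<kappa>" for \<kappa> :: real
  proof -
    have fin: "finite (Per w)"
    proof (rule ccontr)
      assume "infinite (Per w)"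
      then obtain S where S: "S \<subseteq> Per w" "finite S" "card S = nat \<lceil>\<kappa>\<rceil> + 1"
        by (meson infinite_arbitrarily_large)
      have "real (card S) \<le> \<kappa>" using bound[OF h S(2,1)] .
      with S(3) show False by linarith
    qed
    then show ?thesis using bound[OF h fin] by simp
  qed
  show ?thesis
  proof (rule conjI; intro allI impI)
    fix \<kappa> :: real assume "\<kappa> > 0 \<and> (\<forall>b::nat\<ge>1. \<exists>n::nat\<ge>1. real (L w (b * n)) \<le> \<kappa>)"
    then have "\<forall>b::nat\<ge>1. \<exists>n::nat\<ge>1. real (L w (b * n)) \<le> \<kappa>" by blast
    then show "finite (Per w) \<and> real (card (Per w)) \<le> \<kappa>" by (rule A)
  next
    assume "\<exists>C::nat. \<forall>n. L w n \<le> C"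
    then obtain C where C: "\<forall>n. L w n \<le> C" by blast
    have "\<forall>b::nat\<ge>1. \<exists>n::nat\<ge>1. real (L w (b * n)) \<le> real C"
      using C by auto
    then show "finite (Per w)" using A[of "real C"] by blast
  qed
qed

end
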